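(* Let $2\le n\le r$ and let $(X_1,\dots,X_n)$ be a $\{0,1\}$-valued $n$-Markov exchangeable sequence with $P(X_1=0)=1$, represented by the point $w=(w_{0,a,b})_{(a,b)\in\mathcal L_n}$. Then $(X_1,\dots,X_n)$ is $r$-extendible if and only if $w\in\operatorname{conv}\{\gamma^{(n)}_R:R\in\Phi(0,r)\}$. In particular $\operatorname{conv}\{\gamma^{(n)}_R:R\in\Phi(0,r+1)\}\subseteq\operatorname{conv}\{\gamma^{(n)}_R:R\in\Phi(0,r)\}$.
   Context: For a binary sequence its transition count matrix is $N=(n_{i,j})_{i,j\in\{0,1\}}$ with $n_{i,j}$ the number of indices $t$ with $(x_t,x_{t+1})=(i,j)$. $\Phi(0,m)$ is the set of transition count matrices of sequences in $\{0,1\}^m$ starting with $0$. A sequence $(X_1,\dots,X_m)$ is $m$-Markov exchangeable if any two sequences in $\{0,1\}^m$ with the same first value and the same transition count matrix have the same probability. An $n$-Markov exchangeable sequence is $r$-extendible ($r\ge n$) if there is an $r$-Markov exchangeable sequence $(Y_1,\dots,Y_r)$ with $(Y_1,\dots,Y_n)$ equal in law to $(X_1,\dots,X_n)$. Let $\mathcal L_n=\{(a,b)\in\mathbb Z_{\ge0}^2:a+b\le n-2\}\cup\{(n-1,0)\}$; for a distribution of $(X_1,\dots,X_m)$, $m\ge n$, $w_{0,a,b}=P\big((X_1,\dots,X_{a+b+2})=(0^{a+1},1^{b+1})\big)$ for $a+b\le n-2$ and $w_{0,n-1,0}=P(X_1=\dots=X_n=0)$. For $m\ge n$ and $R\in\Phi(0,m)$,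 $h_R$ is the uniform distribution on sequences in $\{0,1\}^m$ starting with $0$ with transition count matrix $R$, and $\gamma^{(n)}_R=(w_{0,a,b})_{(a,b)\in\mathcal L_n}$ computed under $h_R$. *)

theory Defs
  imports "HOL-Analysis.Analysis"
begin

definition seqs :: "nat \<Rightarrow> nat list set" where
  "seqs m = {xs. length xs = m \<and> set xs \<subseteq> {0,1}}"

definition tc :: "nat list \<Rightarrow> nat \<Rightarrow> nat \<Rightarrow> nat" where
  "tc xs i j = card {t. Suc t < length xs \<and> xs ! t = i \<and> xs ! Suc t = j}"

definition tcm :: "nat list \<Rightarrow> nat \<times> nat \<times> nat \<times> nat" where
  "tcm xs = (tc xs 0 0, tc xs 0 1, tc xs 1 0, tc xs 1 1)"

definition Phi0 :: "nat \<Rightarrow> (nat \<times> nat \<times> nat \<times> nat) set" where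
  "Phi0 m = tcm ` {xs \<in> seqs m. xs ! 0 = 0}"

definition is_dist :: "nat \<Rightarrow> (nat list \<Rightarrow> real) \<Rightarrow> bool" where
  "is_dist m p \<longleftrightarrow> (\<forall>xs\<in>seqs m. p xs \<ge> 0) \<and> (\<Sum>xs\<in>seqs m. p xs) = 1"

definition markov_exch :: "nat \<Rightarrow> (nat list \<Rightarrow> real) \<Rightarrow> bool" where
  "markov_exch m p \<longleftrightarrow> is_dist m p \<and>
     (\<forall>xs\<in>seqs m. \<forall>ys\<in>seqs m. xs ! 0 = ys ! 0 \<and> tcm xs = tcm ys \<longrightarrow> p xs = p ys)"

definition marg :: "nat \<Rightarrow> (nat list \<Rightarrow> real) \<Rightarrow> nat \<Rightarrow> nat list \<Rightarrow> real" where
  "marg m p n ys = (\<Sum>xs\<in>{xs\<in>seqs m. take n xs = ys}. p xs)"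

definition extendible :: "nat \<Rightarrow> nat \<Rightarrow> (nat list \<Rightarrow> real) \<Rightarrow> bool" where
  "extendible n r p \<longleftrightarrow>
     (\<exists>q. markov_exch r q \<and> (\<forall>ys\<in>seqs n. marg r q n ys = p ys))"

definition Ln :: "nat \<Rightarrow> (nat \<times> nat) set" where
  "Ln n = {(a,b). a + b + 2 \<le> n} \<union> {(n - 1, 0)}"

definition prefix_prob :: "nat \<Rightarrow> (nat list \<Rightarrow> real) \<Rightarrow> nat list \<Rightarrow> real" where
  "prefix_prob m p zs = (\<Sum>xs\<in>{xs\<in>seqs m. take (length zs) xs = zs}. p xs)"

text \<open>The point (w_{0,a,b})_{(a,b) in L_n} for a distribution p on {0,1}^m, m >= n;
  coordinates outside L_n are set to 0.\<close>
definition wvec :: "nat \<Rightarrow> nat \<Rightarrow> (nat list \<Rightarrow> real) \<Rightarrow> (nat \<times> nat \<Rightarrow> real)" where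
  "wvec n m p = (\<lambda>(a,b).
     if a + b + 2 \<le> n then prefix_prob m p (replicate (a+1) 0 @ replicate (b+1) 1)
     else if (a,b) = (n - 1, 0) then prefix_prob m p (replicate n 0)
     else 0)"

definition hR :: "nat \<Rightarrow> nat \<times> nat \<times> nat \<times> nat \<Rightarrow> nat list \<Rightarrow> real" where
  "hR m R xs = (if xs \<in> {ys\<in>seqs m. ys ! 0 = 0 \<and> tcm ys = R}
                then 1 / real (card {ys\<in>seqs m. ys ! 0 = 0 \<and> tcm ys = R}) else 0)"

definition gamma :: "nat \<Rightarrow> nat \<Rightarrow> nat \<times> nat \<times> nat \<times> nat \<Rightarrow> (nat \<times> nat \<Rightarrow> real)" where
  "gamma n m R = wvec n m (hR m R)"

definition conv_fin :: "(nat \<times> nat \<Rightarrow> real) set \<Rightarrow> (nat \<times> nat \<Rightarrow> real) set" where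
  "conv_fin S = {x. \<exists>c. (\<forall>s\<in>S. c s \<ge> 0) \<and> (\<Sum>s\<in>S. c s) = 1 \<and>
                         (\<forall>k. x k = (\<Sum>s\<in>S. c s * s k))}"

end

theory Submission
  imports Defs
begin

fun tr :: "nat list \<Rightarrow> nat \<Rightarrow> nat \<Rightarrow> nat" where
  "tr (a # b # xs) i j = (if a = i \<and> b = j then 1 else 0) + tr (b # xs) i j"
| "tr _ i j = 0"

lemma tc_tr: "tc xs i j = tr xs i j"
proof (induction xs i j rule: tr.induct)
  case (1 a b xs i j)
  let ?B = "{t. Suc t < length (b#xs) \<and> (b#xs)!t = i \<and> (b#xs)!Suc t = j}"
  have eq: "{t. Suc t < length (a#b#xs) \<and> (a#b#xs)!t = i \<and> (a#b#xs)!Suc t = j}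
     = (if a = i \<and> b = j then {0} else {}) \<union> Suc ` ?B"
    (is "?L = ?R")
  proof (intro set_eqI iffI)
    fix t assume "t \<in> ?L" then show "t \<in> ?R" by (cases t) auto
  next
    fix t assume "t \<in> ?R" then show "t \<in> ?L" by (auto split: if_splits)
  qed
  have fin: "finite ?B" by (rule finite_subset[of _ "{..<length (b#xs)}"]) auto
  have "tc (a#b#xs) i j = card ?R" unfolding tc_def eq by simp
  also have "\<dots> = (if a = i \<and> b = j then 1 else 0) + card ?B"
    using fin by (subst card_Un_disjoint) (auto simp: card_image)
  finally show ?case using 1 by (simp add: tc_def)
qed (simp_all add: tc_def)

lemma tr_Cons: "tr (x # ys) i j = (if ys \<noteq> [] \<and> x = i \<and> hd ys = j then 1 else 0) + tr ys i j"
  by (cases ys) auto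

lemma tr_append: "tr (xs @ ys) i j = tr xs i j + tr ys i j
   + (if xs \<noteq> [] \<and> ys \<noteq> [] \<and> last xs = i \<and> hd ys = j then 1 else 0)"
proof (induction xs)
  case Nil then show ?case by simp
next
  case (Cons x xs) then show ?case by (cases xs) (auto simp: tr_Cons)
qed

lemma tr_snoc: "tr (xs @ [c]) i j = tr xs i j + (if xs \<noteq> [] \<and> last xs = i \<and> c = j then 1 else 0)"
  by (simp add: tr_append)

lemma tr_balance: "set xs \<subseteq> {0,1} \<Longrightarrow> xs \<noteq> [] \<Longrightarrow>
  tr xs 0 1 + (if hd xs = 1 then 1 else 0) = tr xs 1 0 + (if last xs = 1 then 1 else 0)"
proof (induction xs)
  case (Cons x xs)
  show ?case
  proof (cases "xs = []")
    case True then show ?thesis by simp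
  next
    case False
    have "hd xs \<in> {0,1}" "x \<in> {0,1}" using Cons.prems False hd_in_set by auto
    then show ?thesis using Cons False by (auto simp: tr_Cons)
  qed
qed simp

lemma last_eq:
  assumes "set xs \<subseteq> {0,1}" "set ys \<subseteq> {0,1}" "xs \<noteq> []" "ys \<noteq> []" "hd xs = hd ys"
    "tr xs = tr ys"
  shows "last xs = last ys"
proof -
  have "last xs \<in> {0,1}" using assms(1) last_in_set[OF assms(3)] by blast
  then have X: "last xs = 0 \<or> last xs = 1" by simp
  have "last ys \<in> {0,1}" using assms(2) last_in_set[OF assms(4)] by blast
  then have Y: "last ys = 0 \<or> last ys = 1" by simp
  have E: "(if last xs = 1 then 1 else 0::nat) = (if last ys = 1 then 1 else 0)"
  proof -
    have A: "tr xs 0 1 + (if hd xs = 1 then 1 else 0) = tr xs 1 0 + (if last xs = 1 then 1 else 0)"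
      by (rule tr_balance[OF assms(1,3)])
    have B: "tr xs 0 1 + (if hd xs = 1 then 1 else 0) = tr xs 1 0 + (if last ys = 1 then 1 else 0)"
      using tr_balance[OF assms(2,4)] by (simp only: assms(5)[symmetric] assms(6)[symmetric])
    from A B show ?thesis by linarith
  qed
  show ?thesis
  proof (cases "last xs = 1")
    case True then show ?thesis using E Y by (cases "last ys = 1") simp_all
  next
    case False then show ?thesis using E X Y by (cases "last ys = 1") simp_all
  qed
qed

lemma tr_zero: "set zs \<subseteq> {0,1} \<Longrightarrow> i \<notin> {0,1} \<or> j \<notin> {0,1} \<Longrightarrow> tr zs i j = 0"
  by (induction zs i j rule: tr.induct) auto

lemma tcm_tr: assumes "set xs \<subseteq> {0,1}" "set ys \<subseteq> {0,1}" shows "tcm xs = tcm ys \<longleftrightarrow> tr xs = tr ys"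
proof
  assume "tcm xs = tcm ys"
  then have h: "tr xs i j = tr ys i j" if "i \<in> {0,1}" "j \<in> {0,1}" for i j
    using that by (auto simp: tcm_def tc_tr)
  show "tr xs = tr ys"
  proof (intro ext)
    fix i j
    show "tr xs i j = tr ys i j"
    proof (cases "i \<in> {0,1} \<and> j \<in> {0,1}")
      case True then show ?thesis using h by blast
    next
      case False
      then show ?thesis using tr_zero assms by metis
    qed
  qed
qed (simp add: tcm_def tc_tr)


lemma fin_seqs: "finite (seqs m)"
proof -
  have "seqs m = {xs. set xs \<subseteq> {0,1} \<and> length xs = m}" by (auto simp: seqs_def)
  then show ?thesis using finite_lists_length_eq[of "{0::nat,1}" m] by simp
qed

lemma seqs_app:
  assumes "z \<in> seqs k" "k \<le> m"
  shows "{x\<in>seqs m. take k x = z} = (\<lambda>y. z @ y) ` seqs (m - k)"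
proof (intro set_eqI iffI)
  fix x assume x: "x \<in> {x\<in>seqs m. take k x = z}"
  then have "x = z @ drop k x" by (metis (mono_tags, lifting) append_take_drop_id mem_Collect_eq)
  moreover have "drop k x \<in> seqs (m - k)" using x by (auto simp: seqs_def dest: in_set_dropD)
  ultimately show "x \<in> (\<lambda>y. z @ y) ` seqs (m - k)" by blast
next
  fix x assume "x \<in> (\<lambda>y. z @ y) ` seqs (m - k)"
  then show "x \<in> {x\<in>seqs m. take k x = z}" using assms by (auto simp: seqs_def)
qed

lemma sum_prefix:
  assumes "z \<in> seqs k" "k \<le> m"
  shows "(\<Sum>x\<in>{x\<in>seqs m. take k x = z}. f x) = (\<Sum>y\<in>seqs (m - k). f (z @ y))"
  unfolding seqs_app[OF assms] by (subst sum.reindex) (auto simp: inj_on_def)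

lemma prefix_prob_cong: "(\<And>x. x \<in> seqs m \<Longrightarrow> q x = q' x) \<Longrightarrow> prefix_prob m q zs = prefix_prob m q' zs"
  unfolding prefix_prob_def by (rule sum.cong) auto

lemma wvec_cong: "(\<And>x. x \<in> seqs m \<Longrightarrow> q x = q' x) \<Longrightarrow> wvec n m q = wvec n m q'"
  unfolding wvec_def using prefix_prob_cong[of m q q'] by (auto simp: fun_eq_iff)

lemma prefix_marg:
  assumes "n \<le> m" "length zs \<le> n"
  shows "prefix_prob n (marg m q n) zs = prefix_prob m q zs"
proof -
  let ?l = "length zs"
  let ?S = "{x\<in>seqs m. take ?l x = zs}"
  let ?T = "{ys\<in>seqs n. take ?l ys = zs}"
  have fS: "finite ?S" using fin_seqs by simp
  have fT: "finite ?T" using fin_seqs by simp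
  have img: "take n ` ?S \<subseteq> ?T"
  proof
    fix y assume "y \<in> take n ` ?S"
    then obtain x where x: "x \<in> ?S" "y = take n x" by blast
    then show "y \<in> ?T" using assms by (auto simp: seqs_def min_def dest: in_set_takeD)
  qed
  have "prefix_prob n (marg m q n) zs = (\<Sum>ys\<in>?T. \<Sum>x\<in>{x\<in>?S. take n x = ys}. q x)"
    unfolding prefix_prob_def marg_def
  proof (rule sum.cong[OF refl])
    fix ys assume ys: "ys \<in> ?T"
    show "(\<Sum>xs\<in>{xs \<in> seqs m. take n xs = ys}. q xs) = (\<Sum>x\<in>{x\<in>?S. take n x = ys}. q x)"
    proof (rule sum.cong)
      show "{xs \<in> seqs m. take n xs = ys} = {x\<in>?S. take n x = ys}"
        using ys assms by (auto simp: min_def)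
    qed simp
  qed
  also have "\<dots> = (\<Sum>x\<in>?S. q x)" by (rule sum.group[OF fS fT img])
  finally show ?thesis by (simp add: prefix_prob_def)
qed

lemma wvec_marg: "n \<le> m \<Longrightarrow> wvec n n (marg m q n) = wvec n m q"
  unfolding wvec_def by (auto simp: fun_eq_iff prefix_marg)


lemma dist_start:
  assumes "is_dist m q"
  shows "(\<Sum>x\<in>{x\<in>seqs m. x!0 = 0}. q x) = 1 \<longleftrightarrow> (\<forall>x\<in>seqs m. x!0 \<noteq> 0 \<longrightarrow> q x = 0)"
proof -
  let ?A = "{x\<in>seqs m. x!0 = 0}" and ?B = "{x\<in>seqs m. x!0 \<noteq> 0}"
  have "seqs m = ?A \<union> ?B" by auto
  then have "1 = (\<Sum>x\<in>?A. q x) + (\<Sum>x\<in>?B. q x)"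
    using assms fin_seqs[of m] unfolding is_dist_def
    by (metis (no_types, lifting) sum.union_disjoint disjoint_iff finite_Un mem_Collect_eq)
  moreover have "(\<Sum>x\<in>?B. q x) = 0 \<longleftrightarrow> (\<forall>x\<in>?B. q x = 0)"
    using assms fin_seqs[of m] unfolding is_dist_def by (intro sum_nonneg_eq_0_iff) auto
  ultimately show ?thesis by auto
qed

definition Cl :: "nat \<Rightarrow> nat \<times> nat \<times> nat \<times> nat \<Rightarrow> nat list set" where
  "Cl m R = {ys\<in>seqs m. ys ! 0 = 0 \<and> tcm ys = R}"

lemma hR_alt: "hR m R x = (if x \<in> Cl m R then 1 / real (card (Cl m R)) else 0)"
  by (simp add: hR_def Cl_def)

lemma fin_Cl: "finite (Cl m R)" using fin_seqs unfolding Cl_def by simp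

lemma Cl_ne: "R \<in> Phi0 m \<Longrightarrow> Cl m R \<noteq> {}"
  unfolding Phi0_def Cl_def by auto

lemma hR_nonneg: "hR m R x \<ge> 0" by (simp add: hR_def)

lemma hR_sum: assumes "R \<in> Phi0 m" shows "(\<Sum>x\<in>seqs m. hR m R x) = 1"
proof -
  have sub: "Cl m R \<subseteq> seqs m" by (auto simp: Cl_def)
  have "(\<Sum>x\<in>seqs m. hR m R x) = (\<Sum>x\<in>Cl m R. 1 / real (card (Cl m R)))"
    unfolding hR_alt using sub fin_seqs[of m]
    by (simp add: sum.inter_filter[symmetric] Int_absorb1 Collect_mem_eq inf.absorb2
        flip: Int_def)
  also have "\<dots> = 1" using fin_Cl[of m R] Cl_ne[OF assms] by simp
  finally show ?thesis .
qed

lemma hR_exch: "x \<in> seqs m \<Longrightarrow> y \<in> seqs m \<Longrightarrow> x!0 = y!0 \<Longrightarrow> tcm x = tcm y \<Longrightarrow> hR m R x = hR m R y"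
  unfolding hR_def by auto

lemma hR_start: "x!0 \<noteq> 0 \<Longrightarrow> hR m R x = 0"
  unfolding hR_def by auto

lemma hR_markov: "R \<in> Phi0 m \<Longrightarrow> markov_exch m (hR m R)"
  unfolding markov_exch_def is_dist_def using hR_sum hR_nonneg hR_exch by blast


lemma decomp:
  assumes me: "markov_exch m q" and z: "\<forall>x\<in>seqs m. x!0 \<noteq> 0 \<longrightarrow> q x = 0"
  defines "c \<equiv> \<lambda>R. \<Sum>x\<in>Cl m R. q x"
  shows "\<forall>R. c R \<ge> 0"
    and "(\<Sum>R\<in>Phi0 m. c R) = (\<Sum>x\<in>{x\<in>seqs m. x!0 = 0}. q x)"
    and "\<forall>x\<in>seqs m. q x = (\<Sum>R\<in>Phi0 m. c R * hR m R x)"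
proof -
  have qn: "\<forall>x\<in>seqs m. q x \<ge> 0" using me unfolding markov_exch_def is_dist_def by blast
  have ex: "\<forall>xs\<in>seqs m. \<forall>ys\<in>seqs m. xs!0 = ys!0 \<and> tcm xs = tcm ys \<longrightarrow> q xs = q ys"
    using me unfolding markov_exch_def by blast
  show "\<forall>R. c R \<ge> 0"
  proof
    fix R show "c R \<ge> 0" unfolding c_def
    proof (rule sum_nonneg)
      fix y assume "y \<in> Cl m R" then have "y \<in> seqs m" by (simp add: Cl_def)
      then show "q y \<ge> 0" using qn by blast
    qed
  qed
  let ?S = "{x\<in>seqs m. x!0 = 0}"
  have fS: "finite ?S" using fin_seqs by simp
  have fP: "finite (Phi0 m)" unfolding Phi0_def using fS by simp
  have img: "tcm ` ?S \<subseteq> Phi0 m" unfolding Phi0_def by simp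
  have "(\<Sum>R\<in>Phi0 m. c R) = (\<Sum>R\<in>Phi0 m. \<Sum>x\<in>{x\<in>?S. tcm x = R}. q x)"
    unfolding c_def Cl_def by (rule sum.cong) auto
  also have "\<dots> = (\<Sum>x\<in>?S. q x)" by (rule sum.group[OF fS fP img])
  finally show "(\<Sum>R\<in>Phi0 m. c R) = (\<Sum>x\<in>?S. q x)" .
  show "\<forall>x\<in>seqs m. q x = (\<Sum>R\<in>Phi0 m. c R * hR m R x)"
  proof
    fix x assume x: "x \<in> seqs m"
    show "q x = (\<Sum>R\<in>Phi0 m. c R * hR m R x)"
    proof (cases "x!0 = 0")
      case False
      then have "\<And>R. hR m R x = 0" by (rule hR_start)
      moreover have "q x = 0" using z x False by blast
      ultimately show ?thesis by simp
    next
      case True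
      let ?R = "tcm x"
      have xC: "x \<in> Cl m ?R" using x True by (simp add: Cl_def)
      have R: "?R \<in> Phi0 m" using x True by (simp add: Phi0_def)
      have cR: "c ?R = real (card (Cl m ?R)) * q x"
      proof -
        have "c ?R = (\<Sum>y\<in>Cl m ?R. q x)" unfolding c_def
        proof (rule sum.cong[OF refl])
          fix y assume "y \<in> Cl m ?R"
          then have "y \<in> seqs m" "y!0 = x!0" "tcm y = tcm x" using True by (simp_all add: Cl_def)
          then show "q y = q x" using ex x by blast
        qed
        then show ?thesis by simp
      qed
      have pos: "card (Cl m ?R) > 0" using xC fin_Cl[of m ?R] by (simp add: card_gt_0_iff) blast
      have "(\<Sum>R\<in>Phi0 m. c R * hR m R x) = (\<Sum>R\<in>Phi0 m. if R = ?R then c ?R / real (card (Cl m ?R)) else 0)"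
      proof (rule sum.cong[OF refl])
        fix R assume "R \<in> Phi0 m"
        show "c R * hR m R x = (if R = ?R then c ?R / real (card (Cl m ?R)) else 0)"
          using xC by (auto simp: hR_alt Cl_def)
      qed
      also have "\<dots> = c ?R / real (card (Cl m ?R))" using R fP by (simp add: sum.delta)
      also have "\<dots> = q x" using cR pos by simp
      finally show ?thesis by simp
    qed
  qed
qed

lemma prefix_lin:
  assumes "finite A" "\<forall>x\<in>seqs m. q x = (\<Sum>R\<in>A. c R * hR m R x)"
  shows "prefix_prob m q zs = (\<Sum>R\<in>A. c R * prefix_prob m (hR m R) zs)"
proof -
  let ?P = "{xs\<in>seqs m. take (length zs) xs = zs}"
  have "prefix_prob m q zs = (\<Sum>x\<in>?P. \<Sum>R\<in>A. c R * hR m R x)"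
    unfolding prefix_prob_def using assms(2) by (intro sum.cong) auto
  also have "\<dots> = (\<Sum>R\<in>A. \<Sum>x\<in>?P. c R * hR m R x)" by (rule sum.swap)
  also have "\<dots> = (\<Sum>R\<in>A. c R * prefix_prob m (hR m R) zs)"
    unfolding prefix_prob_def by (simp add: sum_distrib_left)
  finally show ?thesis .
qed

lemma wvec_lin:
  assumes "finite A" "\<forall>x\<in>seqs m. q x = (\<Sum>R\<in>A. c R * hR m R x)"
  shows "wvec n m q k = (\<Sum>R\<in>A. c R * gamma n m R k)"
proof -
  obtain a b where k: "k = (a,b)" by fastforce
  show ?thesis unfolding k gamma_def wvec_def using prefix_lin[OF assms] by auto
qed

lemma conv_intro:
  fixes f :: "'a \<Rightarrow> (nat \<times> nat \<Rightarrow> real)"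
  assumes fA: "finite A" and nn: "\<forall>a\<in>A. c a \<ge> 0" and s1: "(\<Sum>a\<in>A. c a) = 1"
    and xe: "\<forall>k. x k = (\<Sum>a\<in>A. c a * f a k)"
  shows "x \<in> conv_fin (f ` A)"
proof -
  define c' where "c' s = (\<Sum>a\<in>{a\<in>A. f a = s}. c a)" for s
  have fI: "finite (f ` A)" using fA by simp
  have "\<forall>s\<in>f ` A. c' s \<ge> 0" unfolding c'_def using nn by (auto intro: sum_nonneg)
  moreover have "(\<Sum>s\<in>f ` A. c' s) = 1" unfolding c'_def using sum.group[OF fA fI subset_refl, of c] s1 by simp
  moreover have "\<forall>k. x k = (\<Sum>s\<in>f ` A. c' s * s k)"
  proof
    fix k
    have "(\<Sum>s\<in>f ` A. c' s * s k) = (\<Sum>s\<in>f ` A. \<Sum>a\<in>{a\<in>A. f a = s}. c a * f a k)"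
      unfolding c'_def by (auto simp: sum_distrib_right intro!: sum.cong)
    also have "\<dots> = (\<Sum>a\<in>A. c a * f a k)" by (rule sum.group[OF fA fI subset_refl])
    finally show "x k = (\<Sum>s\<in>f ` A. c' s * s k)" using xe[rule_format, of k] by linarith
  qed
  ultimately show ?thesis unfolding conv_fin_def by blast
qed

lemma sum_section:
  fixes h :: "'b \<Rightarrow> real" and f :: "'a \<Rightarrow> 'b"
  assumes fA: "finite A"
  defines "B \<equiv> inv_into A f ` (f ` A)"
  shows "(\<Sum>a\<in>A. if a \<in> B then h (f a) else 0) = (\<Sum>s\<in>f ` A. h s)"
proof -
  have BA: "B \<subseteq> A" unfolding B_def by (auto intro: inv_into_into)
  have "(\<Sum>a\<in>A. if a \<in> B then h (f a) else 0) = (\<Sum>a\<in>B. h (f a))"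
    using fA BA by (simp add: sum.If_cases Int_absorb1 inf.absorb2)
  also have "\<dots> = (\<Sum>s\<in>f ` A. h (f (inv_into A f s)))"
    unfolding B_def by (subst sum.reindex) (auto simp: inj_on_inv_into)
  also have "\<dots> = (\<Sum>s\<in>f ` A. h s)" by (rule sum.cong) (auto simp: f_inv_into_f)
  finally show ?thesis .
qed

lemma conv_elim:
  fixes f :: "'a \<Rightarrow> (nat \<times> nat \<Rightarrow> real)"
  assumes fA: "finite A" and x: "x \<in> conv_fin (f ` A)"
  shows "\<exists>c. (\<forall>a\<in>A. c a \<ge> 0) \<and> (\<Sum>a\<in>A. c a) = 1 \<and> (\<forall>k. x k = (\<Sum>a\<in>A. c a * f a k))"
proof -
  obtain c' where c': "\<forall>s\<in>f ` A. c' s \<ge> 0" "(\<Sum>s\<in>f ` A. c' s) = 1" "\<forall>k. x k = (\<Sum>s\<in>f ` A. c' s * s k)"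
    using x unfolding conv_fin_def by blast
  define B where "B = inv_into A f ` (f ` A)"
  define c where "c a = (if a \<in> B then c' (f a) else 0)" for a
  have "\<forall>a\<in>A. c a \<ge> 0" unfolding c_def using c'(1) by auto
  moreover have "(\<Sum>a\<in>A. c a) = 1" unfolding c_def B_def using sum_section[OF fA, of f c'] c'(2) by simp
  moreover have "\<forall>k. x k = (\<Sum>a\<in>A. c a * f a k)"
  proof
    fix k
    have "(\<Sum>a\<in>A. c a * f a k) = (\<Sum>a\<in>A. if a \<in> B then c' (f a) * f a k else 0)"
      unfolding c_def by (rule sum.cong) auto
    also have "\<dots> = (\<Sum>s\<in>f ` A. c' s * s k)" unfolding B_def by (rule sum_section[OF fA])
    finally show "x k = (\<Sum>a\<in>A. c a * f a k)" using c'(3)[rule_format, of k] by linarith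
  qed
  ultimately show ?thesis by blast
qed


lemma seqs_bin: "x \<in> seqs m \<Longrightarrow> set x \<subseteq> {0,1}" by (simp add: seqs_def)
lemma seqs_len: "x \<in> seqs m \<Longrightarrow> length x = m" by (simp add: seqs_def)

lemma tr_app_eq:
  assumes "set z \<subseteq> {0,1}" "set z' \<subseteq> {0,1}" "z \<noteq> []" "z' \<noteq> []" "hd z = hd z'" "tr z = tr z'"
  shows "tr (z @ y) = tr (z' @ y)"
proof -
  have "last z = last z'" by (rule last_eq[OF assms])
  then show ?thesis using assms(3,4,6) by (simp add: fun_eq_iff tr_append)
qed

lemma marg_markov:
  assumes me: "markov_exch m q" and k: "1 \<le> k" "k \<le> m"
  shows "markov_exch k (marg m q k)"
proof -
  have qn: "\<forall>x\<in>seqs m. q x \<ge> 0" and q1: "(\<Sum>x\<in>seqs m. q x) = 1"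
    using me unfolding markov_exch_def is_dist_def by blast+
  have ex: "\<forall>xs\<in>seqs m. \<forall>ys\<in>seqs m. xs!0 = ys!0 \<and> tcm xs = tcm ys \<longrightarrow> q xs = q ys"
    using me unfolding markov_exch_def by blast
  have nn: "\<forall>z\<in>seqs k. marg m q k z \<ge> 0"
    unfolding marg_def using qn by (auto intro: sum_nonneg)
  have img: "take k ` seqs m \<subseteq> seqs k" using k by (auto simp: seqs_def min_def dest: in_set_takeD)
  have tot: "(\<Sum>z\<in>seqs k. marg m q k z) = 1"
    unfolding marg_def using sum.group[OF fin_seqs fin_seqs img, of q] q1 by simp
  have exz: "marg m q k z = marg m q k z'"
    if z: "z \<in> seqs k" "z' \<in> seqs k" "z!0 = z'!0" "tcm z = tcm z'" for z z'
  proof -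
    have ne: "z \<noteq> []" "z' \<noteq> []" using z k by (auto simp: seqs_def)
    have hd: "hd z = hd z'" using ne z by (simp add: hd_conv_nth)
    have trz: "tr z = tr z'" using z tcm_tr seqs_bin by blast
    have "marg m q k z = (\<Sum>y\<in>seqs (m - k). q (z @ y))"
      unfolding marg_def by (rule sum_prefix[OF z(1) k(2)])
    also have "\<dots> = (\<Sum>y\<in>seqs (m - k). q (z' @ y))"
    proof (rule sum.cong[OF refl])
      fix y assume y: "y \<in> seqs (m - k)"
      have i1: "z @ y \<in> seqs m" "z' @ y \<in> seqs m" using z y k by (auto simp: seqs_def)
      have i2: "(z @ y)!0 = (z' @ y)!0" using ne z by (simp add: nth_append)
      have "tr (z @ y) = tr (z' @ y)" by (rule tr_app_eq[OF seqs_bin[OF z(1)] seqs_bin[OF z(2)] ne hd trz])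
      then have i3: "tcm (z @ y) = tcm (z' @ y)" using tcm_tr seqs_bin i1 by blast
      show "q (z @ y) = q (z' @ y)" using ex i1 i2 i3 by blast
    qed
    also have "\<dots> = marg m q k z'"
      unfolding marg_def by (rule sum_prefix[OF z(2) k(2), symmetric])
    finally show ?thesis .
  qed
  show ?thesis unfolding markov_exch_def is_dist_def using nn tot exz by blast
qed


lemma tr_dup: "tr (a @ x # x # b) i j = tr (a @ x # b) i j + (if i = x \<and> j = x then 1 else 0)"
  by (simp add: tr_append)

lemma base_form:
  "set z \<subseteq> {0,1} \<Longrightarrow> z \<noteq> [] \<Longrightarrow> hd z = 0 \<Longrightarrow> tr z 1 0 = 0 \<Longrightarrow>
   \<exists>a b. a \<ge> 1 \<and> z = replicate a 0 @ replicate b (1::nat)"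
proof (induction z rule: rev_induct)
  case Nil then show ?case by simp
next
  case (snoc c u)
  show ?case
  proof (cases "u = []")
    case True
    then have "c = 0" using snoc.prems by simp
    then show ?thesis using True by (intro exI[of _ 1] exI[of _ 0]) simp
  next
    case False
    have tu: "tr u 1 0 = 0" using snoc.prems(4) by (simp add: tr_snoc)
    have "hd u = 0" using snoc.prems(3) False by simp
    then obtain a b where ab: "a \<ge> 1" "u = replicate a 0 @ replicate b (1::nat)"
      using snoc.IH snoc.prems(1) False tu by auto
    have c: "c = 0 \<or> c = 1" using snoc.prems(1) by auto
    show ?thesis
    proof (cases "c = 1")
      case True
      then have "u @ [c] = replicate a 0 @ replicate (Suc b) 1"
        using ab by (simp add: replicate_append_same)
      then show ?thesis using ab by blast
    next
      case False
      then have c0: "c = 0" using c by blast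
      have "last u \<noteq> 1" using snoc.prems(4) c0 \<open>u \<noteq> []\<close> by (simp add: tr_snoc split: if_splits)
      then have "b = 0" using ab by (cases b) (auto simp: last_replicate split: if_splits)
      then have "u @ [c] = replicate (Suc a) 0 @ replicate 0 1"
        using ab c0 by (simp add: replicate_append_same)
      then show ?thesis using ab by (intro exI[of _ "Suc a"] exI[of _ 0]) simp
    qed
  qed
qed

lemma rearr0:
  "set z \<subseteq> {0,1} \<Longrightarrow> z \<noteq> [] \<Longrightarrow> hd z = 0 \<Longrightarrow> last z = 0 \<Longrightarrow> tr z 1 0 \<ge> 1 \<Longrightarrow>
   \<exists>u. set u \<subseteq> {0,1} \<and> u \<noteq> [] \<and> hd u = 0 \<and> last u = 1 \<and> length u + 1 = length z
       \<and> tr (u @ [0]) = tr z"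
proof (induction z rule: rev_induct)
  case Nil then show ?case by simp
next
  case (snoc c y)
  have c0: "c = 0" using snoc.prems(4) by simp
  have yne: "y \<noteq> []" using snoc.prems(5) by (cases y) auto
  have hy: "hd y = 0" using snoc.prems(3) yne by simp
  have bny: "set y \<subseteq> {0,1}" using snoc.prems(1) by simp
  have ly: "last y = 0 \<or> last y = 1" using bny last_in_set[OF yne] by blast
  show ?case
  proof (cases "last y = 1")
    case True
    then show ?thesis using bny yne hy c0 by (intro exI[of _ y]) simp
  next
    case False
    then have ly0: "last y = 0" using ly by blast
    have "tr y 1 0 \<ge> 1" using snoc.prems(5) ly0 by (simp add: tr_snoc)
    then obtain u' where u': "set u' \<subseteq> {0,1}" "u' \<noteq> []" "hd u' = 0" "last u' = 1"
       "length u' + 1 = length y" "tr (u' @ [0]) = tr y"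
      using snoc.IH[OF bny yne hy ly0] by blast
    have "tr ((0 # u') @ [0]) = tr (y @ [c])"
    proof (intro ext)
      fix i j
      have "tr ((0 # u') @ [0]) i j = (if 0 = i \<and> 0 = j then 1 else 0) + tr (u' @ [0]) i j"
        using u'(2,3) by (simp add: tr_Cons)
      also have "\<dots> = tr (y @ [c]) i j" using u'(6) ly0 c0 yne by (simp add: tr_snoc)
      finally show "tr ((0 # u') @ [0]) i j = tr (y @ [c]) i j" .
    qed
    then show ?thesis using u' by (intro exI[of _ "0 # u'"]) simp
  qed
qed

lemma rearr1:
  "set z \<subseteq> {0,1} \<Longrightarrow> z \<noteq> [] \<Longrightarrow> hd z = 0 \<Longrightarrow> last z = 1 \<Longrightarrow> tr z 1 0 \<ge> 1 \<Longrightarrow>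
   \<exists>u. set u \<subseteq> {0,1} \<and> u \<noteq> [] \<and> hd u = 0 \<and> last u = 0 \<and> length u + 1 = length z
       \<and> tr (u @ [1]) = tr z"
proof (induction z rule: rev_induct)
  case Nil then show ?case by simp
next
  case (snoc c y)
  have c1: "c = 1" using snoc.prems(4) by simp
  have yne: "y \<noteq> []" using snoc.prems(5) by (cases y) auto
  have hy: "hd y = 0" using snoc.prems(3) yne by simp
  have bny: "set y \<subseteq> {0,1}" using snoc.prems(1) by simp
  have ly: "last y = 0 \<or> last y = 1" using bny last_in_set[OF yne] by blast
  show ?case
  proof (cases "last y = 0")
    case True
    then show ?thesis using bny yne hy c1 by (intro exI[of _ y]) simp
  next
    case False
    then have ly1: "last y = 1" using ly by simp
    have "tr y 1 0 \<ge> 1" using snoc.prems(5) ly1 c1 by (simp add: tr_snoc)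
    then obtain u' where u': "set u' \<subseteq> {0,1}" "u' \<noteq> []" "hd u' = 0" "last u' = 0"
       "length u' + 1 = length y" "tr (u' @ [1]) = tr y"
      using snoc.IH[OF bny yne hy ly1] by blast
    have "tr u' 1 0 \<ge> 1"
    proof -
      have "tr (u' @ [1]) 1 0 = tr u' 1 0" by (simp add: tr_snoc)
      then show ?thesis using u'(6) \<open>tr y 1 0 \<ge> 1\<close> by simp
    qed
    then have "tc u' 1 0 \<noteq> 0" by (simp add: tc_tr)
    then have "{t. Suc t < length u' \<and> u' ! t = 1 \<and> u' ! Suc t = 0} \<noteq> {}"
      unfolding tc_def by (metis card.empty)
    then obtain t where t: "Suc t < length u'" "u' ! t = 1" "u' ! Suc t = 0" by blast
    define a where "a = take t u'"
    define b where "b = drop (Suc t) u'"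
    have u'eq: "u' = a @ 1 # b" unfolding a_def b_def using t id_take_nth_drop[of t u'] by simp
    have t0: "t \<noteq> 0" using t(2) u'(2,3) by (metis hd_conv_nth zero_neq_one)
    have ane: "a \<noteq> []" unfolding a_def using t0 u'(2) by simp
    have bne: "b \<noteq> []" unfolding b_def using t(1) by simp
    define u where "u = a @ 1 # 1 # b"
    have "set u = set u'" unfolding u_def u'eq by auto
    moreover have "u \<noteq> []" unfolding u_def by simp
    moreover have "hd u = 0" unfolding u_def using u'(3) ane u'eq by simp
    moreover have "last u = 0" unfolding u_def using u'(4) bne u'eq by simp
    moreover have "length u + 1 = length (y @ [c])" unfolding u_def using u'(5) u'eq by simp
    moreover have "tr (u @ [1]) = tr (y @ [c])"
    proof (intro ext)
      fix i j
      have "tr (u @ [1]) i j = tr (a @ 1 # 1 # (b @ [1])) i j" unfolding u_def by simp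
      also have "\<dots> = tr (a @ 1 # (b @ [1])) i j + (if i = 1 \<and> j = 1 then 1 else 0)"
        by (rule tr_dup)
      also have "\<dots> = tr (u' @ [1]) i j + (if i = 1 \<and> j = 1 then 1 else 0)"
        unfolding u'eq by simp
      also have "\<dots> = tr (y @ [c]) i j" using u'(6) ly1 c1 yne by (simp add: tr_snoc)
      finally show "tr (u @ [1]) i j = tr (y @ [c]) i j" .
    qed
    ultimately show ?thesis using u'(1) by blast
  qed
qed


lemma inj_main:
  fixes d :: "nat list \<Rightarrow> real"
  assumes n: "1 \<le> n"
    and ex: "\<forall>x\<in>seqs n. \<forall>y\<in>seqs n. x!0 = 0 \<and> y!0 = 0 \<and> tcm x = tcm y \<longrightarrow> d x = d y"
    and w1: "\<forall>a b. a + b + 2 \<le> n \<longrightarrow> prefix_prob n d (replicate (a+1) 0 @ replicate (b+1) 1) = 0"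
    and w2: "prefix_prob n d (replicate n 0) = 0"
  shows "\<forall>x\<in>seqs n. x!0 = 0 \<longrightarrow> d x = 0"
proof -
  define S where "S = prefix_prob n d"
  have Sinv: "S z = S z'" if z: "set z \<subseteq> {0,1}" "set z' \<subseteq> {0,1}" "z \<noteq> []" "z' \<noteq> []"
    "hd z = 0" "hd z' = 0" "length z = length z'" "length z \<le> n" "tr z = tr z'" for z z'
  proof -
    let ?k = "length z"
    have zs: "z \<in> seqs ?k" "z' \<in> seqs ?k" using z by (auto simp: seqs_def)
    have "S z = (\<Sum>y\<in>seqs (n - ?k). d (z @ y))"
      unfolding S_def prefix_prob_def by (rule sum_prefix[OF zs(1) z(8)])
    also have "\<dots> = (\<Sum>y\<in>seqs (n - ?k). d (z' @ y))"
    proof (rule sum.cong[OF refl])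
      fix y assume y: "y \<in> seqs (n - ?k)"
      have i1: "z @ y \<in> seqs n" "z' @ y \<in> seqs n" using zs y z(8) by (auto simp: seqs_def)
      have i2: "(z @ y)!0 = 0" "(z' @ y)!0 = 0" using z by (simp_all add: nth_append hd_conv_nth)
      have "tr (z @ y) = tr (z' @ y)" by (rule tr_app_eq) (use z in simp_all)
      then have i3: "tcm (z @ y) = tcm (z' @ y)" using tcm_tr seqs_bin i1 by blast
      show "d (z @ y) = d (z' @ y)" using ex i1 i2 i3 by blast
    qed
    also have "\<dots> = S z'"
      unfolding S_def prefix_prob_def z(7)[symmetric] by (rule sum_prefix[OF zs(2) z(8), symmetric])
    finally show ?thesis .
  qed
  have Ssplit: "S z = S (z @ [0]) + S (z @ [1])" if z: "length z < n" for z
  proof -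
    let ?k = "length z"
    let ?A = "{x\<in>seqs n. take ?k x = z}"
    let ?B0 = "{x\<in>seqs n. take (Suc ?k) x = z @ [0]}"
    let ?B1 = "{x\<in>seqs n. take (Suc ?k) x = z @ [1]}"
    have eq: "?A = ?B0 \<union> ?B1"
    proof (intro set_eqI iffI)
      fix x assume x: "x \<in> ?A"
      then have len: "?k < length x" using z by (simp add: seqs_def)
      then have tk: "take (Suc ?k) x = z @ [x ! ?k]" using x by (simp add: take_Suc_conv_app_nth)
      have "set x \<subseteq> {0,1}" using x by (simp add: seqs_def)
      then have "x ! ?k \<in> {0,1}" using nth_mem[OF len] by blast
      then show "x \<in> ?B0 \<union> ?B1" using x tk by auto
    next
      fix x assume x: "x \<in> ?B0 \<union> ?B1"
      then obtain c where c: "take (Suc ?k) x = z @ [c]" by blast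
      have "take ?k (take (Suc ?k) x) = z" unfolding c by simp
      then have "take ?k x = z" by (simp add: min_def)
      then show "x \<in> ?A" using x by blast
    qed
    have "S z = (\<Sum>x\<in>?B0 \<union> ?B1. d x)" unfolding S_def prefix_prob_def eq by simp
    also have "\<dots> = (\<Sum>x\<in>?B0. d x) + (\<Sum>x\<in>?B1. d x)"
      by (rule sum.union_disjoint) (use fin_seqs[of n] in auto)
    also have "\<dots> = S (z @ [0]) + S (z @ [1])" unfolding S_def prefix_prob_def by simp
    finally show ?thesis .
  qed
  have Sfull: "S z = d z" if "z \<in> seqs n" for z
  proof -
    have "{x\<in>seqs n. take (length z) x = z} = {z}" using that by (auto simp: seqs_def)
    then show ?thesis unfolding S_def prefix_prob_def by simp
  qed
  have rep0: "S (replicate a 0) = 0" if "1 \<le> a" "a \<le> n" for a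
    using that
  proof (induction "n - a" arbitrary: a)
    case 0
    then have "a = n" by simp
    then show ?case using w2 by (simp add: S_def)
  next
    case (Suc k)
    have "S (replicate a 0) = S (replicate a 0 @ [0]) + S (replicate a 0 @ [1])"
      by (rule Ssplit) (use Suc in simp)
    moreover have "S (replicate a 0 @ [0]) = 0"
    proof -
      have "replicate a 0 @ [0::nat] = replicate (Suc a) 0" by (simp add: replicate_append_same)
      moreover have "S (replicate (Suc a) 0) = 0" using Suc by (intro Suc.hyps) simp_all
      ultimately show ?thesis by simp
    qed
    moreover have "S (replicate a 0 @ [1]) = 0"
    proof -
      have "replicate a 0 @ [1::nat] = replicate ((a - 1) + 1) 0 @ replicate (0 + 1) 1" using Suc by simp
      moreover have "(a - 1) + 0 + 2 \<le> n" using Suc by simp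
      ultimately show ?thesis using w1 unfolding S_def by metis
    qed
    ultimately show ?case by simp
  qed
  have main: "\<forall>z. set z \<subseteq> {0,1} \<and> z \<noteq> [] \<and> hd z = 0 \<and> length z \<le> n \<and> tr z 1 0 = m \<longrightarrow> S z = 0" for m
  proof (induction m)
    case 0
    show ?case
    proof (intro allI impI)
      fix z assume z: "set z \<subseteq> {0,1} \<and> z \<noteq> [] \<and> hd z = 0 \<and> length z \<le> n \<and> tr z 1 0 = 0"
      then have zp: "set z \<subseteq> {0,1}" "z \<noteq> []" "hd z = 0" "length z \<le> n" "tr z 1 0 = 0" by blast+
      obtain a b where ab: "a \<ge> 1" "z = replicate a 0 @ replicate b (1::nat)"
        using base_form[OF zp(1,2,3,5)] by blast
      show "S z = 0"
      proof (cases b)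
        case 0
        then have za: "z = replicate a 0" using ab(2) by simp
        then have "a \<le> n" using zp(4) by simp
        then show ?thesis using za rep0 ab(1) by blast
      next
        case (Suc b')
        have "z = replicate ((a - 1) + 1) 0 @ replicate (b' + 1) 1" using ab Suc by simp
        moreover have "(a - 1) + b' + 2 \<le> n" using z ab Suc by simp
        ultimately show ?thesis using w1 unfolding S_def by metis
      qed
    qed
  next
    case (Suc m)
    have Z0: "S z = 0" if z: "set z \<subseteq> {0,1}" "z \<noteq> []" "hd z = 0" "length z \<le> n"
      "tr z 1 0 = Suc m" "last z = 0" for z
    proof -
      obtain u where u: "set u \<subseteq> {0,1}" "u \<noteq> []" "hd u = 0" "last u = 1" "length u + 1 = length z"
        "tr (u @ [0]) = tr z"
        using rearr0[OF z(1,2,3,6)] z(5) by auto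
      have "S z = S (u @ [0])" by (rule Sinv) (use z u in simp_all)
      also have "\<dots> = S u - S (u @ [1])" using Ssplit[of u] u z by simp
      also have "\<dots> = 0"
      proof -
        have t0: "tr (u @ [0]) 1 0 = tr u 1 0 + 1" using u(2,4) by (simp add: tr_snoc)
        have "tr u 1 0 = m" using t0 u(6) z(5) by simp
        moreover have "tr (u @ [1]) 1 0 = tr u 1 0" by (simp add: tr_snoc)
        ultimately have "S u = 0" "S (u @ [1]) = 0" using Suc.IH u z by simp_all
        then show ?thesis by simp
      qed
      finally show ?thesis .
    qed
    show ?case
    proof (intro allI impI)
      fix z assume zz: "set z \<subseteq> {0,1} \<and> z \<noteq> [] \<and> hd z = 0 \<and> length z \<le> n \<and> tr z 1 0 = Suc m"
      then have z: "set z \<subseteq> {0,1}" "z \<noteq> []" "hd z = 0" "length z \<le> n" "tr z 1 0 = Suc m" by auto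
      have "last z \<in> {0,1}" using z(1) last_in_set[OF z(2)] by blast
      then have lz: "last z = 0 \<or> last z = 1" by simp
      show "S z = 0"
      proof (cases "last z = 0")
        case True then show ?thesis using Z0 z by blast
      next
        case False
        then have l1: "last z = 1" using lz by simp
        obtain u where u: "set u \<subseteq> {0,1}" "u \<noteq> []" "hd u = 0" "last u = 0" "length u + 1 = length z"
          "tr (u @ [1]) = tr z"
          using rearr1[OF z(1,2,3) l1] z(5) by auto
        have "S z = S (u @ [1])" by (rule Sinv) (use z u in simp_all)
        also have "\<dots> = S u - S (u @ [0])" using Ssplit[of u] u z by simp
        also have "\<dots> = 0"
        proof -
          have "tr (u @ [1]) 1 0 = tr u 1 0" by (simp add: tr_snoc)
          then have tu: "tr u 1 0 = Suc m" using u(6) z(5) by simp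
          have "tr (u @ [0]) 1 0 = tr u 1 0" using u(4) by (simp add: tr_snoc)
          then have "S (u @ [0]) = 0" using tu u z by (intro Z0) simp_all
          moreover have "S u = 0" using tu u z by (intro Z0) simp_all
          ultimately show ?thesis by simp
        qed
        finally show ?thesis .
      qed
    qed
  qed
  show ?thesis
  proof (intro ballI impI)
    fix x assume x: "x \<in> seqs n" "x!0 = 0"
    have ne: "x \<noteq> []" using x n by (auto simp: seqs_def)
    have "S x = 0" using main[of "tr x 1 0"] x ne by (auto simp: seqs_def hd_conv_nth)
    then show "d x = 0" using Sfull[OF x(1)] by simp
  qed
qed


lemma fin_Phi0: "finite (Phi0 m)"
  unfolding Phi0_def using fin_seqs by simp

lemma wvec_marg2: "n \<le> l \<Longrightarrow> l \<le> m \<Longrightarrow> wvec n l (marg m q l) = wvec n m q"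
  unfolding wvec_def by (auto simp: fun_eq_iff prefix_marg)

lemma prefix0: "1 \<le> m \<Longrightarrow> prefix_prob m q [0] = (\<Sum>x\<in>{x\<in>seqs m. x!0 = 0}. q x)"
  unfolding prefix_prob_def
proof (rule sum.cong)
  assume m: "1 \<le> m"
  show "{xs \<in> seqs m. take (length [0]) xs = [0]} = {x \<in> seqs m. x ! 0 = 0}"
  proof (intro set_eqI iffI)
    fix x assume "x \<in> {xs \<in> seqs m. take (length [0]) xs = [0]}"
    then show "x \<in> {x \<in> seqs m. x ! 0 = 0}" using m by (cases x) (auto simp: seqs_def)
  next
    fix x assume "x \<in> {x \<in> seqs m. x ! 0 = 0}"
    then show "x \<in> {xs \<in> seqs m. take (length [0]) xs = [0]}" using m by (cases x) (auto simp: seqs_def)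
  qed
qed simp

lemma marg_start:
  assumes "\<forall>x\<in>seqs m. x!0 \<noteq> 0 \<longrightarrow> q x = 0" "1 \<le> l"
  shows "\<forall>z\<in>seqs l. z!0 \<noteq> 0 \<longrightarrow> marg m q l z = 0"
proof (intro ballI impI)
  fix z assume z: "z \<in> seqs l" "z!0 \<noteq> 0"
  show "marg m q l z = 0" unfolding marg_def
  proof (rule sum.neutral, intro ballI)
    fix x assume x: "x \<in> {xs \<in> seqs m. take l xs = z}"
    have "z \<noteq> []" using z assms(2) by (auto simp: seqs_def)
    have "take l x ! 0 = x ! 0" using assms(2) by simp
    then have "x!0 = z!0" using x by simp
    moreover have "x \<in> seqs m" using x by simp
    ultimately show "q x = 0" using assms(1) z(2) by simp
  qed
qed

lemma represent:
  assumes me: "markov_exch m q" and z: "\<forall>x\<in>seqs m. x!0 \<noteq> 0 \<longrightarrow> q x = 0"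
  shows "\<exists>c. (\<forall>R\<in>Phi0 m. c R \<ge> 0) \<and> (\<Sum>R\<in>Phi0 m. c R) = 1 \<and>
     (\<forall>k. wvec n m q k = (\<Sum>R\<in>Phi0 m. c R * gamma n m R k))"
proof -
  define c where "c = (\<lambda>R. \<Sum>x\<in>Cl m R. q x)"
  have d: "\<forall>R. c R \<ge> 0" "(\<Sum>R\<in>Phi0 m. c R) = (\<Sum>x\<in>{x\<in>seqs m. x!0 = 0}. q x)"
    "\<forall>x\<in>seqs m. q x = (\<Sum>R\<in>Phi0 m. c R * hR m R x)"
    using decomp[OF me z] unfolding c_def by blast+
  have "is_dist m q" using me by (simp add: markov_exch_def)
  then have "(\<Sum>x\<in>{x\<in>seqs m. x!0 = 0}. q x) = 1" using dist_start z by blast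
  then have 2: "(\<Sum>R\<in>Phi0 m. c R) = 1" using d(2) by linarith
  have 1: "\<forall>R\<in>Phi0 m. c R \<ge> 0" using d(1) by blast
  have 3: "\<forall>k. wvec n m q k = (\<Sum>R\<in>Phi0 m. c R * gamma n m R k)"
    using wvec_lin[OF fin_Phi0 d(3)] by blast
  show ?thesis using 1 2 3 by blast
qed

lemma mix_markov:
  assumes nn: "\<forall>R\<in>Phi0 m. c R \<ge> 0" and s1: "(\<Sum>R\<in>Phi0 m. c R) = 1"
  shows "markov_exch m (\<lambda>x. \<Sum>R\<in>Phi0 m. c R * hR m R x)"
proof -
  have "\<forall>x\<in>seqs m. (\<Sum>R\<in>Phi0 m. c R * hR m R x) \<ge> 0"
    using nn hR_nonneg by (auto intro!: sum_nonneg)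
  moreover have "(\<Sum>x\<in>seqs m. \<Sum>R\<in>Phi0 m. c R * hR m R x) = 1"
  proof -
    have "(\<Sum>x\<in>seqs m. \<Sum>R\<in>Phi0 m. c R * hR m R x) = (\<Sum>R\<in>Phi0 m. c R * (\<Sum>x\<in>seqs m. hR m R x))"
      by (subst sum.swap) (simp add: sum_distrib_left)
    also have "\<dots> = (\<Sum>R\<in>Phi0 m. c R)" by (rule sum.cong) (simp_all add: hR_sum)
    finally show ?thesis using s1 by simp
  qed
  moreover have "\<forall>xs\<in>seqs m. \<forall>ys\<in>seqs m. xs ! 0 = ys ! 0 \<and> tcm xs = tcm ys \<longrightarrow>
      (\<Sum>R\<in>Phi0 m. c R * hR m R xs) = (\<Sum>R\<in>Phi0 m. c R * hR m R ys)"
  proof (intro ballI impI)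
    fix xs ys assume "xs \<in> seqs m" "ys \<in> seqs m" "xs ! 0 = ys ! 0 \<and> tcm xs = tcm ys"
    then have "\<And>R. hR m R xs = hR m R ys" using hR_exch by blast
    then show "(\<Sum>R\<in>Phi0 m. c R * hR m R xs) = (\<Sum>R\<in>Phi0 m. c R * hR m R ys)" by simp
  qed
  ultimately show ?thesis unfolding markov_exch_def is_dist_def by blast
qed


theorem mainTheorem12:
  fixes n r :: nat and p :: "nat list \<Rightarrow> real"
  assumes "2 \<le> n" and "n \<le> r"
    and "markov_exch n p"
    and "(\<Sum>xs\<in>{xs\<in>seqs n. xs ! 0 = 0}. p xs) = 1"
  shows "(extendible n r p \<longleftrightarrow> wvec n n p \<in> conv_fin (gamma n r ` Phi0 r))
    \<and> conv_fin (gamma n (r + 1) ` Phi0 (r + 1)) \<subseteq> conv_fin (gamma n r ` Phi0 r)"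
proof -
  have n1: "1 \<le> n" and r1: "1 \<le> r" using assms(1,2) by simp_all
  have pd: "is_dist n p" using assms(3) unfolding markov_exch_def by blast
  have pz: "\<forall>x\<in>seqs n. x!0 \<noteq> 0 \<longrightarrow> p x = 0" using dist_start[OF pd] assms(4) by blast
  have pex: "\<forall>xs\<in>seqs n. \<forall>ys\<in>seqs n. xs!0 = ys!0 \<and> tcm xs = tcm ys \<longrightarrow> p xs = p ys"
    using assms(3) unfolding markov_exch_def by blast
  have fwd: "wvec n n p \<in> conv_fin (gamma n r ` Phi0 r)" if ext: "extendible n r p"
  proof -
    obtain q where q: "markov_exch r q" "\<forall>ys\<in>seqs n. marg r q n ys = p ys"
      using ext unfolding extendible_def by blast
    have qd: "is_dist r q" using q(1) unfolding markov_exch_def by blast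
    have "(\<Sum>x\<in>{x\<in>seqs r. x!0 = 0}. q x) = prefix_prob r q [0]" by (rule prefix0[OF r1, symmetric])
    also have "\<dots> = prefix_prob n (marg r q n) [0]" by (rule prefix_marg[OF assms(2), symmetric]) (use n1 in simp)
    also have "\<dots> = prefix_prob n p [0]" by (rule prefix_prob_cong) (use q(2) in blast)
    also have "\<dots> = 1" using prefix0[OF n1, of p] assms(4) by simp
    finally have "(\<Sum>x\<in>{x\<in>seqs r. x!0 = 0}. q x) = 1" .
    then have qz: "\<forall>x\<in>seqs r. x!0 \<noteq> 0 \<longrightarrow> q x = 0" using dist_start[OF qd] by blast
    obtain c where c: "\<forall>R\<in>Phi0 r. c R \<ge> 0" "(\<Sum>R\<in>Phi0 r. c R) = 1"
      "\<forall>k. wvec n r q k = (\<Sum>R\<in>Phi0 r. c R * gamma n r R k)"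
      using represent[OF q(1) qz, of n] by blast
    have "wvec n n p = wvec n n (marg r q n)" by (rule wvec_cong) (use q(2) in simp)
    also have "\<dots> = wvec n r q" by (rule wvec_marg[OF assms(2)])
    finally have "\<forall>k. wvec n n p k = (\<Sum>R\<in>Phi0 r. c R * gamma n r R k)" using c(3) by simp
    then show ?thesis by (rule conv_intro[OF fin_Phi0 c(1) c(2)])
  qed
  have bwd: "extendible n r p" if cv: "wvec n n p \<in> conv_fin (gamma n r ` Phi0 r)"
  proof -
    obtain c where c: "\<forall>R\<in>Phi0 r. c R \<ge> 0" "(\<Sum>R\<in>Phi0 r. c R) = 1"
      "\<forall>k. wvec n n p k = (\<Sum>R\<in>Phi0 r. c R * gamma n r R k)"
      using conv_elim[OF fin_Phi0 cv] by blast
    define q where "q = (\<lambda>x. \<Sum>R\<in>Phi0 r. c R * hR r R x)"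
    have qm: "markov_exch r q" unfolding q_def by (rule mix_markov[OF c(1,2)])
    have qz: "\<forall>x\<in>seqs r. x!0 \<noteq> 0 \<longrightarrow> q x = 0" unfolding q_def using hR_start by simp
    define p' where "p' = marg r q n"
    have pm': "markov_exch n p'" unfolding p'_def by (rule marg_markov[OF qm n1 assms(2)])
    have pz': "\<forall>x\<in>seqs n. x!0 \<noteq> 0 \<longrightarrow> p' x = 0" unfolding p'_def by (rule marg_start[OF qz n1])
    have pex': "\<forall>xs\<in>seqs n. \<forall>ys\<in>seqs n. xs!0 = ys!0 \<and> tcm xs = tcm ys \<longrightarrow> p' xs = p' ys"
      using pm' unfolding markov_exch_def by blast
    have wp: "wvec n n p' = wvec n r q" unfolding p'_def by (rule wvec_marg[OF assms(2)])
    have W: "\<forall>k. wvec n r q k = (\<Sum>R\<in>Phi0 r. c R * gamma n r R k)"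
    proof -
      have pw: "\<forall>x\<in>seqs r. q x = (\<Sum>R\<in>Phi0 r. c R * hR r R x)" unfolding q_def by simp
      show ?thesis using wvec_lin[OF fin_Phi0 pw] by blast
    qed
    have weq: "wvec n n p k = wvec n n p' k" for k
    proof -
      have "wvec n n p' k = wvec n r q k" using wp by simp
      then show ?thesis using c(3)[rule_format, of k] W[rule_format, of k] by linarith
    qed
    define d where "d = (\<lambda>x. p x - p' x)"
    have dpp: "prefix_prob n d zs = prefix_prob n p zs - prefix_prob n p' zs" for zs
      unfolding d_def prefix_prob_def by (simp add: sum_subtractf)
    have w1: "\<forall>a b. a + b + 2 \<le> n \<longrightarrow> prefix_prob n d (replicate (a+1) 0 @ replicate (b+1) 1) = 0"
    proof (intro allI impI)
      fix a b :: nat assume ab: "a + b + 2 \<le> n"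
      have "wvec n n p (a,b) = wvec n n p' (a,b)" by (rule weq)
      then show "prefix_prob n d (replicate (a+1) 0 @ replicate (b+1) 1) = 0"
        using ab unfolding dpp wvec_def by simp
    qed
    have w2: "prefix_prob n d (replicate n 0) = 0"
    proof -
      have "wvec n n p (n - 1, 0) = wvec n n p' (n - 1, 0)" by (rule weq)
      moreover have "\<not> (n - 1 + 0 + 2 \<le> n)" using n1 by simp
      ultimately show ?thesis unfolding dpp wvec_def by simp
    qed
    have dex: "\<forall>x\<in>seqs n. \<forall>y\<in>seqs n. x!0 = 0 \<and> y!0 = 0 \<and> tcm x = tcm y \<longrightarrow> d x = d y"
    proof (intro ballI impI)
      fix x y assume xy: "x \<in> seqs n" "y \<in> seqs n" "x!0 = 0 \<and> y!0 = 0 \<and> tcm x = tcm y"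
      then have "x!0 = y!0 \<and> tcm x = tcm y" by simp
      then have "p x = p y" "p' x = p' y" using pex pex' xy(1,2) by blast+
      then show "d x = d y" unfolding d_def by simp
    qed
    have d0: "\<forall>x\<in>seqs n. x!0 = 0 \<longrightarrow> d x = 0" by (rule inj_main[OF n1 dex w1 w2])
    have "\<forall>ys\<in>seqs n. marg r q n ys = p ys"
    proof
      fix ys assume ys: "ys \<in> seqs n"
      show "marg r q n ys = p ys"
      proof (cases "ys!0 = 0")
        case True
        then have "d ys = 0" using d0 ys by blast
        then show ?thesis unfolding d_def p'_def by simp
      next
        case False
        then have "p ys = 0" "p' ys = 0" using pz pz' ys by blast+
        then show ?thesis unfolding p'_def by simp
      qed
    qed
    then show ?thesis unfolding extendible_def using qm by blast
  qed
  have sub: "conv_fin (gamma n (r + 1) ` Phi0 (r + 1)) \<subseteq> conv_fin (gamma n r ` Phi0 r)"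
  proof
    fix x assume x: "x \<in> conv_fin (gamma n (r + 1) ` Phi0 (r + 1))"
    obtain e where e: "\<forall>R\<in>Phi0 (r+1). e R \<ge> 0" "(\<Sum>R\<in>Phi0 (r+1). e R) = 1"
      "\<forall>k. x k = (\<Sum>R\<in>Phi0 (r+1). e R * gamma n (r+1) R k)"
      using conv_elim[OF fin_Phi0 x] by blast
    have "\<forall>R'\<in>Phi0 (r+1). \<exists>c. (\<forall>R\<in>Phi0 r. c R \<ge> 0) \<and> (\<Sum>R\<in>Phi0 r. c R) = 1 \<and>
       (\<forall>k. gamma n (r+1) R' k = (\<Sum>R\<in>Phi0 r. c R * gamma n r R k))"
    proof
      fix R' assume R': "R' \<in> Phi0 (r+1)"
      define h where "h = hR (r+1) R'"
      have hm: "markov_exch (r+1) h" unfolding h_def by (rule hR_markov[OF R'])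
      have hz: "\<forall>x\<in>seqs (r+1). x!0 \<noteq> 0 \<longrightarrow> h x = 0" unfolding h_def using hR_start by simp
      define q' where "q' = marg (r+1) h r"
      have qm: "markov_exch r q'" unfolding q'_def by (rule marg_markov[OF hm r1]) simp
      have qz: "\<forall>x\<in>seqs r. x!0 \<noteq> 0 \<longrightarrow> q' x = 0" unfolding q'_def by (rule marg_start[OF hz r1])
      obtain c where c: "\<forall>R\<in>Phi0 r. c R \<ge> 0" "(\<Sum>R\<in>Phi0 r. c R) = 1"
        "\<forall>k. wvec n r q' k = (\<Sum>R\<in>Phi0 r. c R * gamma n r R k)"
        using represent[OF qm qz, of n] by blast
      have "gamma n (r+1) R' = wvec n r q'" unfolding gamma_def q'_def h_def
        by (rule wvec_marg2[symmetric]) (use assms(2) in simp_all)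
      then show "\<exists>c. (\<forall>R\<in>Phi0 r. c R \<ge> 0) \<and> (\<Sum>R\<in>Phi0 r. c R) = 1 \<and>
         (\<forall>k. gamma n (r+1) R' k = (\<Sum>R\<in>Phi0 r. c R * gamma n r R k))"
        using c by (intro exI[of _ c]) simp
    qed
    then obtain C where C: "\<forall>R'\<in>Phi0 (r+1). (\<forall>R\<in>Phi0 r. C R' R \<ge> 0) \<and> (\<Sum>R\<in>Phi0 r. C R' R) = 1 \<and>
       (\<forall>k. gamma n (r+1) R' k = (\<Sum>R\<in>Phi0 r. C R' R * gamma n r R k))"
      by (rule bchoice[elim_format]) blast
    define f where "f R = (\<Sum>R'\<in>Phi0 (r+1). e R' * C R' R)" for R
    have fn: "\<forall>R\<in>Phi0 r. f R \<ge> 0" unfolding f_def using e(1) C by (auto intro!: sum_nonneg)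
    have "(\<Sum>R\<in>Phi0 r. f R) = (\<Sum>R'\<in>Phi0 (r+1). e R' * (\<Sum>R\<in>Phi0 r. C R' R))"
      unfolding f_def by (subst sum.swap) (simp add: sum_distrib_left)
    also have "\<dots> = (\<Sum>R'\<in>Phi0 (r+1). e R')" by (rule sum.cong) (use C in simp_all)
    finally have f1: "(\<Sum>R\<in>Phi0 r. f R) = 1" using e(2) by simp
    have fx: "\<forall>k. x k = (\<Sum>R\<in>Phi0 r. f R * gamma n r R k)"
    proof
      fix k
      have "x k = (\<Sum>R'\<in>Phi0 (r+1). e R' * gamma n (r+1) R' k)" using e(3) by blast
      also have "\<dots> = (\<Sum>R'\<in>Phi0 (r+1). e R' * (\<Sum>R\<in>Phi0 r. C R' R * gamma n r R k))"
      proof (rule sum.cong[OF refl])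
        fix R' assume "R' \<in> Phi0 (r+1)"
        then have "gamma n (r+1) R' k = (\<Sum>R\<in>Phi0 r. C R' R * gamma n r R k)" using C by blast
        then show "e R' * gamma n (r+1) R' k = e R' * (\<Sum>R\<in>Phi0 r. C R' R * gamma n r R k)" by simp
      qed
      also have "\<dots> = (\<Sum>R\<in>Phi0 r. f R * gamma n r R k)"
      proof -
        have "(\<Sum>R\<in>Phi0 r. f R * gamma n r R k) = (\<Sum>R\<in>Phi0 r. \<Sum>R'\<in>Phi0 (r+1). e R' * C R' R * gamma n r R k)"
          unfolding f_def by (simp add: sum_distrib_right)
        also have "\<dots> = (\<Sum>R'\<in>Phi0 (r+1). \<Sum>R\<in>Phi0 r. e R' * C R' R * gamma n r R k)" by (rule sum.swap)
        also have "\<dots> = (\<Sum>R'\<in>Phi0 (r+1). e R' * (\<Sum>R\<in>Phi0 r. C R' R * gamma n r R k))"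
          by (simp add: sum_distrib_left mult.assoc)
        finally show ?thesis by simp
      qed
      finally show "x k = (\<Sum>R\<in>Phi0 r. f R * gamma n r R k)" .
    qed
    show "x \<in> conv_fin (gamma n r ` Phi0 r)" by (rule conv_intro[OF fin_Phi0 fn f1 fx])
  qed
  show ?thesis using fwd bwd sub by blast
qed

end
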